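(* For any prime number $p$ and any integer $n\ge 1$, $F(p,n)=p^{n-1}(p^n+p-1)$.
   Context: For a prime $p$ and $n\ge 1$, $r(p,n)$ denotes the number of orbits of the left action of $\mathrm{SL}(2,\mathbb{Z})$ on $(\mathbb{Z}_p\times\mathbb{Z}_p)^n$, where elements of $(\mathbb{Z}_p\times\mathbb{Z}_p)^n$ are viewed as $2\times n$ matrices over $\mathbb{Z}_p$ and a matrix in $\mathrm{SL}(2,\mathbb{Z})$ acts by left matrix multiplication with entries reduced modulo $p$. Define $F(p,n):=r(p,n+1)-r(p,n)$ for $n\ge 1$. *)

theory Defs
  imports Main "HOL-Computational_Algebra.Primes"
begin

text \<open>SL(2,Z): integer 2x2 matrices (a b; c d), encoded as (a,b,c,d), with determinant 1.\<close>
definition SL2Z :: "(int \<times> int \<times> int \<times> int) set" where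
  "SL2Z = {(a, b, c, d). a * d - b * c = 1}"

text \<open>A 2 x n matrix over Z_p is a list of n columns (x,y) with entries in {0..p-1}.\<close>
definition configs :: "nat \<Rightarrow> nat \<Rightarrow> (int \<times> int) list set" where
  "configs p n = {xs. length xs = n \<and>
     (\<forall>(x, y) \<in> set xs. 0 \<le> x \<and> x < int p \<and> 0 \<le> y \<and> y < int p)}"

definition act :: "nat \<Rightarrow> int \<times> int \<times> int \<times> int \<Rightarrow> (int \<times> int) list \<Rightarrow> (int \<times> int) list" where
  "act p g xs = (case g of (a, b, c, d) \<Rightarrow>
     map (\<lambda>(x, y). ((a * x + b * y) mod int p, (c * x + d * y) mod int p)) xs)"

definition orbit :: "nat \<Rightarrow> (int \<times> int) list \<Rightarrow> (int \<times> int) list set" where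
  "orbit p xs = {act p g xs | g. g \<in> SL2Z}"

definition r :: "nat \<Rightarrow> nat \<Rightarrow> nat" where
  "r p n = card {orbit p xs | xs. xs \<in> configs p n}"

definition F :: "nat \<Rightarrow> nat \<Rightarrow> int" where
  "F p n = int (r p (n + 1)) - int (r p n)"

end

theory Submission imports Defs "HOL-Number_Theory.Cong" begin

definition mv :: "nat \<Rightarrow> int\<times>int\<times>int\<times>int \<Rightarrow> int\<times>int \<Rightarrow> int\<times>int" where
 "mv p g v = (case g of (a,b,c,d) \<Rightarrow> case v of (x,y) \<Rightarrow> ((a*x+b*y) mod int p, (c*x+d*y) mod int p))"

lemma act_map: "act p g xs = map (mv p g) xs"
  by (cases g) (auto simp: act_def mv_def)

definition V :: "nat \<Rightarrow> (int\<times>int) set" where "V p = {0..<int p} \<times> {0..<int p}"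

lemma configs_alt: "configs p n = {xs. set xs \<subseteq> V p \<and> length xs = n}"
  by (auto simp: configs_def V_def)

definition mmul :: "int\<times>int\<times>int\<times>int \<Rightarrow> int\<times>int\<times>int\<times>int \<Rightarrow> int\<times>int\<times>int\<times>int" where
 "mmul g h = (case g of (a,b,c,d) \<Rightarrow> case h of (a',b',c',d') \<Rightarrow>
     (a*a'+b*c', a*b'+b*d', c*a'+d*c', c*b'+d*d'))"

definition dtm :: "int\<times>int\<times>int\<times>int \<Rightarrow> int" where "dtm g = (case g of (a,b,c,d) \<Rightarrow> a*d-b*c)"
definition adj :: "int\<times>int\<times>int\<times>int \<Rightarrow> int\<times>int\<times>int\<times>int" where
  "adj g = (case g of (a,b,c,d) \<Rightarrow> (d,-b,-c,a))"
definition gm :: "nat \<Rightarrow> int\<times>int\<times>int\<times>int \<Rightarrow> int\<times>int\<times>int\<times>int" where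
  "gm p g = (case g of (a,b,c,d) \<Rightarrow> (a mod int p, b mod int p, c mod int p, d mod int p))"
definition Sp :: "nat \<Rightarrow> (int\<times>int\<times>int\<times>int) set" where
  "Sp p = {g. gm p g = g \<and> dtm g mod int p = 1}"
definition dt :: "int\<times>int \<Rightarrow> int\<times>int \<Rightarrow> int" where
  "dt u w = fst u * snd w - snd u * fst w"

lemma modlin: "(a*(u mod m) + b*(w mod m)) mod m = (a*u+b*w) mod (m::int)"
  by (metis mod_add_eq mod_mult_right_eq)

lemma mv_mul: "mv p (mmul g h) v = mv p g (mv p h v)"
proof -
  obtain a b c d where g: "g = (a,b,c,d)" by (cases g) auto
  obtain a' b' c' d' where h: "h = (a',b',c',d')" by (cases h) auto
  obtain x y where v: "v = (x,y)" by (cases v) auto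
  show ?thesis unfolding g h v mv_def mmul_def
    by (simp add: modlin algebra_simps)
qed

lemma act_mul: "act p (mmul g h) xs = act p g (act p h xs)"
  by (simp add: act_map mv_mul)

lemma dtm_mul: "dtm (mmul g h) = dtm g * dtm h"
  by (cases g, cases h) (simp add: dtm_def mmul_def algebra_simps)

lemma adj_mul: "mmul (adj g) g = (dtm g, 0, 0, dtm g)"
  by (cases g) (simp add: dtm_def mmul_def adj_def algebra_simps)

lemma dtm_adj: "dtm (adj g) = dtm g"
  by (cases g) (simp add: dtm_def adj_def algebra_simps)

lemma SL2Z_iff: "g \<in> SL2Z \<longleftrightarrow> dtm g = 1"
  by (cases g) (simp add: SL2Z_def dtm_def)

lemma modlin2: "((a mod m)*u + (b mod m)*w) mod m = (a*u+b*w) mod (m::int)"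
  by (metis mod_add_eq mod_mult_left_eq)

lemma mod_dm: "((A mod m)*(B mod m) - (C mod m)*(D mod m)) mod m = (A*B - C*D) mod (m::int)"
  by (metis mod_diff_eq mod_mult_eq)

lemma mod_dm2: "(a*(x mod m) - b*(y mod m)) mod m = (a*x - b*y) mod (m::int)"
  by (metis mod_diff_eq mod_mult_right_eq)

lemma mv_gm: "mv p (gm p g) v = mv p g v"
  by (cases g, cases v) (simp add: mv_def gm_def modlin2)

lemma act_gm: "act p (gm p g) xs = act p g xs"
  by (simp add: act_map mv_gm)

lemma orbit_iff: "ys \<in> orbit p xs \<longleftrightarrow> (\<exists>g\<in>SL2Z. ys = act p g xs)"
  by (auto simp: orbit_def)

context
  fixes p :: nat
  assumes pp: "prime p"
begin

lemma P_gt1: "int p > 1"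
  using prime_gt_1_nat[OF pp] by simp

lemma P_prime: "prime (int p)"
  using pp by simp

lemma mv_V: "mv p g v \<in> V p"
  using P_gt1 by (cases g, cases v) (simp add: mv_def V_def)

lemma mv_id: "v \<in> V p \<Longrightarrow> mv p (1,0,0,1) v = v"
  by (cases v) (simp add: mv_def V_def)

lemma act_id: "xs \<in> configs p n \<Longrightarrow> act p (1,0,0,1) xs = xs"
  by (auto simp: act_map configs_alt mv_id intro!: map_idI)

lemma act_configs: "xs \<in> configs p n \<Longrightarrow> act p g xs \<in> configs p n"
  by (auto simp: act_map configs_alt mv_V)

lemma orbit_self: "xs \<in> configs p n \<Longrightarrow> xs \<in> orbit p xs"
  unfolding orbit_iff
  by (rule bexI[of _ "(1,0,0,1)"]) (auto simp: act_id SL2Z_iff dtm_def)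

lemma orbit_sub: "xs \<in> configs p n \<Longrightarrow> orbit p xs \<subseteq> configs p n"
  by (auto simp: orbit_iff act_configs)

lemma orbit_trans: "ys \<in> orbit p xs \<Longrightarrow> zs \<in> orbit p ys \<Longrightarrow> zs \<in> orbit p xs"
  unfolding orbit_iff
  by (metis SL2Z_iff act_mul dtm_mul mult_1_left)

lemma orbit_sym: "xs \<in> configs p n \<Longrightarrow> ys \<in> orbit p xs \<Longrightarrow> xs \<in> orbit p ys"
proof -
  assume xs: "xs \<in> configs p n" and "ys \<in> orbit p xs"
  then obtain g where g: "g \<in> SL2Z" "ys = act p g xs" by (auto simp: orbit_iff)
  have "act p (adj g) ys = act p (mmul (adj g) g) xs" using g by (simp add: act_mul)
  also have "\<dots> = xs" using g xs by (simp add: adj_mul SL2Z_iff act_id)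
  finally show ?thesis using g by (auto simp: orbit_iff SL2Z_iff dtm_adj intro!: bexI[of _ "adj g"])
qed

lemma orbit_eq: "xs \<in> configs p n \<Longrightarrow> ys \<in> orbit p xs \<Longrightarrow> orbit p ys = orbit p xs"
  by (meson orbit_sub orbit_sym orbit_trans subsetD subsetI subset_antisym)

lemma orbit_disj: "xs \<in> configs p n \<Longrightarrow> ys \<in> configs p n \<Longrightarrow> orbit p xs \<inter> orbit p ys \<noteq> {}
   \<Longrightarrow> orbit p xs = orbit p ys"
  by (metis disjoint_iff orbit_eq)

lemma inv_mod: "\<not> int p dvd a \<Longrightarrow> \<exists>ai. int p dvd (a*ai - 1)"
proof -
  assume "\<not> int p dvd a"
  then have "coprime a (int p)" by (metis P_prime prime_imp_coprime coprime_commute)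
  then obtain x where "[a*x = 1] (mod int p)" using cong_solve_coprime_int by blast
  then show ?thesis by (auto simp: cong_iff_dvd_diff)
qed

lemma P_ndvd1: "\<not> int p dvd 1"
  using P_gt1 by (simp add: zdvd1_eq)

lemma lift_nz:
  assumes "\<not> int p dvd c" "int p dvd (a*d - b*c - 1)"
  shows "\<exists>g\<in>SL2Z. gm p g = gm p (a,b,c,d)"
proof -
  obtain ci where ci: "int p dvd (c*ci - 1)" using inv_mod assms(1) by blast
  define x where "x = (a-1)*ci"
  define y where "y = (d-1)*ci"
  have S: "(1+x*c, (1+x*c)*y + x, c, c*y+1) \<in> SL2Z" by (simp add: SL2Z_iff dtm_def algebra_simps)
  have e1: "1+x*c - a = (a-1)*(c*ci - 1)" by (simp add: x_def algebra_simps)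
  have e2: "c*y+1 - d = (d-1)*(c*ci-1)" by (simp add: y_def algebra_simps)
  have e3: "(1+x*c)*y + x - b = ci*(a*d - b*c - 1) + (a-1)*(d-1)*ci*(c*ci - 1) + b*(c*ci - 1)"
    unfolding x_def y_def by algebra
  have d1: "int p dvd (1+x*c - a)" unfolding e1 using ci by simp
  have d2: "int p dvd (c*y+1 - d)" unfolding e2 using ci by simp
  have d3: "int p dvd ((1+x*c)*y + x - b)" unfolding e3 using ci assms(2) by simp
  show ?thesis
    by (rule bexI[OF _ S]) (simp add: gm_def mod_eq_dvd_iff d1 d2 d3)
qed

lemma lift:
  assumes "int p dvd (a*d - b*c - 1)"
  shows "\<exists>g\<in>SL2Z. gm p g = gm p (a,b,c,d)"
proof (cases "int p dvd c")
  case False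
  then show ?thesis using lift_nz assms by blast
next
  case True
  have nd: "\<not> int p dvd (a+c)"
  proof
    assume "int p dvd (a+c)"
    then have "int p dvd ((a+c) - c)" using True by (rule dvd_diff)
    then have "int p dvd a" by simp
    then have "int p dvd (a*d - b*c)" using True by simp
    then have "int p dvd ((a*d - b*c) - (a*d - b*c - 1))" using assms by (rule dvd_diff)
    then have "int p dvd 1" by simp
    then show False using P_ndvd1 by simp
  qed
  have "int p dvd (a*(b+d) - b*(a+c) - 1)" using assms by (simp add: algebra_simps)
  then obtain g' where g': "g' \<in> SL2Z" "gm p g' = gm p (a,b,a+c,b+d)" using lift_nz nd by blast
  obtain a1 b1 c1 d1 where gg: "g' = (a1,b1,c1,d1)" by (cases g') auto
  have S: "(a1,b1,c1-a1,d1-b1) \<in> SL2Z" using g'(1) gg by (simp add: SL2Z_iff dtm_def algebra_simps)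
  have m: "a1 mod int p = a mod int p" "b1 mod int p = b mod int p"
     "c1 mod int p = (a+c) mod int p" "d1 mod int p = (b+d) mod int p"
    using g'(2) gg by (auto simp: gm_def)
  have "(c1 - a1) mod int p = c mod int p"
    by (metis m(1) m(3) mod_diff_eq add_diff_cancel_left')
  moreover have "(d1 - b1) mod int p = d mod int p"
    by (metis m(2) m(4) mod_diff_eq add_diff_cancel_left')
  ultimately show ?thesis using m
    by (intro bexI[OF _ S]) (simp add: gm_def)
qed

lemma Sp_lift: "h \<in> Sp p \<Longrightarrow> \<exists>g\<in>SL2Z. gm p g = h"
proof -
  assume h: "h \<in> Sp p"
  obtain a b c d where hh: "h = (a,b,c,d)" by (cases h) auto
  have "(a*d-b*c) mod int p = 1 mod int p" using h hh P_gt1 by (simp add: Sp_def dtm_def)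
  then have "int p dvd (a*d-b*c-1)" by (simp add: mod_eq_dvd_iff)
  then obtain g where "g\<in>SL2Z" "gm p g = gm p h" using lift hh by blast
  moreover have "gm p h = h" using h by (simp add: Sp_def)
  ultimately show ?thesis by auto
qed

lemma gm_Sp: "g \<in> SL2Z \<Longrightarrow> gm p g \<in> Sp p"
proof -
  assume g: "g \<in> SL2Z"
  obtain a b c d where gg: "g = (a,b,c,d)" by (cases g) auto
  have "(a mod int p * (d mod int p) - b mod int p * (c mod int p)) mod int p = (a*d-b*c) mod int p"
    by (rule mod_dm)
  then show ?thesis using g gg P_gt1 by (simp add: Sp_def gm_def dtm_def SL2Z_iff)
qed

lemma orbit_Sp: "orbit p xs = (\<lambda>h. act p h xs) ` Sp p"
proof
  show "orbit p xs \<subseteq> (\<lambda>h. act p h xs) ` Sp p"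
  proof
    fix ys assume "ys \<in> orbit p xs"
    then obtain g where g: "g \<in> SL2Z" "ys = act p g xs" by (auto simp: orbit_iff)
    then have "ys = act p (gm p g) xs" by (simp add: act_gm)
    then show "ys \<in> (\<lambda>h. act p h xs) ` Sp p" using gm_Sp[OF g(1)] by blast
  qed
  show "(\<lambda>h. act p h xs) ` Sp p \<subseteq> orbit p xs"
    using Sp_lift by (auto simp: orbit_iff) (metis act_gm)
qed

lemma dt_mv: "dt (mv p g u) (mv p g w) mod int p = (dtm g * dt u w) mod int p"
proof -
  obtain a b c d where gg: "g = (a,b,c,d)" by (cases g) auto
  obtain x y where u: "u = (x,y)" by (cases u) auto
  obtain x' y' where w: "w = (x',y')" by (cases w) auto
  have "dt (mv p g u) (mv p g w) mod int p =
     ((a*x+b*y)*(c*x'+d*y') - (c*x+d*y)*(a*x'+b*y')) mod int p"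
    by (simp add: gg u w mv_def dt_def mod_dm)
  also have "\<dots> = (dtm g * dt u w) mod int p"
    by (simp add: gg u w dtm_def dt_def algebra_simps)
  finally show ?thesis .
qed

definition rk2 :: "nat \<Rightarrow> (int\<times>int) list \<Rightarrow> bool" where
  "rk2 q xs = (\<exists>u\<in>set xs. \<exists>w\<in>set xs. dt u w mod int q \<noteq> 0)"
definition zr :: "(int\<times>int) list \<Rightarrow> bool" where
  "zr xs = (\<forall>u\<in>set xs. u = (0,0))"

lemma rk2_act: "g \<in> SL2Z \<Longrightarrow> rk2 p (act p g xs) = rk2 p xs"
  by (auto simp: rk2_def act_map dt_mv SL2Z_iff)

lemma rk2_orbit: "ys \<in> orbit p xs \<Longrightarrow> rk2 p ys = rk2 p xs"
  by (auto simp: orbit_iff rk2_act)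

lemma zr_act: "zr xs \<Longrightarrow> zr (act p g xs)"
  by (cases g) (auto simp: zr_def act_map mv_def)

lemma zr_orbit: "xs \<in> configs p n \<Longrightarrow> ys \<in> orbit p xs \<Longrightarrow> zr ys = zr xs"
proof -
  assume xs: "xs \<in> configs p n" and ys: "ys \<in> orbit p xs"
  obtain g where "ys = act p g xs" using ys by (auto simp: orbit_iff)
  moreover obtain h where "xs = act p h ys" using orbit_sym[OF xs ys] by (auto simp: orbit_iff)
  ultimately show ?thesis using zr_act by metis
qed

lemma dvd_mult_P: "int p dvd x*y \<Longrightarrow> int p dvd x \<or> int p dvd y"
  using P_prime by (simp add: prime_dvd_mult_iff)

lemma rng_eq: "x \<in> {0..<int p} \<Longrightarrow> y \<in> {0..<int p} \<Longrightarrow> int p dvd (x - y) \<Longrightarrow> x = y"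
  by (metis atLeastLessThan_iff mod_eq_dvd_iff mod_pos_pos_trivial)

lemma rng_dvd: "x \<in> {0..<int p} \<Longrightarrow> int p dvd x \<Longrightarrow> x = 0"
  using rng_eq[of x 0] P_gt1 by simp

lemma V_nz: "(v1,v2) \<in> V p \<Longrightarrow> (v1,v2) \<noteq> (0,0) \<Longrightarrow> \<not> int p dvd v1 \<or> \<not> int p dvd v2"
  using rng_dvd by (auto simp: V_def)

lemma mult_lem:
  assumes "(v1,v2) \<in> V p" "(v1,v2) \<noteq> (0,0)" "int p dvd (v1*u2 - v2*u1)"
  shows "\<exists>s. int p dvd (u1 - s*v1) \<and> int p dvd (u2 - s*v2)"
proof (cases "int p dvd v1")
  case False
  obtain vi where vi: "int p dvd (v1*vi - 1)" using inv_mod False by blast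
  have e1: "u1 - (u1*vi)*v1 = -u1*(v1*vi - 1)" by (simp add: algebra_simps)
  have e2: "u2 - (u1*vi)*v2 = -u2*(v1*vi - 1) + vi*(v1*u2 - v2*u1)" by (simp add: algebra_simps)
  show ?thesis
    by (rule exI[of _ "u1*vi"]) (simp only: e1 e2, use vi assms(3) in simp)
next
  case True
  then have nd: "\<not> int p dvd v2" using V_nz assms by blast
  obtain wi where wi: "int p dvd (v2*wi - 1)" using inv_mod nd by blast
  have e1: "u2 - (u2*wi)*v2 = -u2*(v2*wi - 1)" by (simp add: algebra_simps)
  have e2: "u1 - (u2*wi)*v1 = -u1*(v2*wi - 1) - wi*(v1*u2 - v2*u1)" by (simp add: algebra_simps)
  show ?thesis
    by (rule exI[of _ "u2*wi"]) (simp only: e1 e2, use wi assms(3) in simp)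
qed

lemma indep:
  assumes "int p dvd (al*u1 + be*u2)" "int p dvd (al*w1 + be*w2)" "\<not> int p dvd (u1*w2 - u2*w1)"
  shows "int p dvd al \<and> int p dvd be"
proof -
  have e1: "al*(u1*w2 - u2*w1) = w2*(al*u1 + be*u2) - u2*(al*w1 + be*w2)" by (simp add: algebra_simps)
  have e2: "be*(u1*w2 - u2*w1) = u1*(al*w1 + be*w2) - w1*(al*u1 + be*u2)" by (simp add: algebra_simps)
  have "int p dvd al*(u1*w2 - u2*w1)" unfolding e1 using assms by simp
  moreover have "int p dvd be*(u1*w2 - u2*w1)" unfolding e2 using assms by simp
  ultimately show ?thesis using dvd_mult_P assms(3) by blast
qed

lemma exist_sol:
  assumes "(v1,v2) \<in> V p" "(v1,v2) \<noteq> (0,0)"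
  shows "\<exists>x y. int p dvd (v1*y - v2*x - dl)"
proof (cases "int p dvd v1")
  case False
  obtain vi where vi: "int p dvd (v1*vi - 1)" using inv_mod False by blast
  have "v1*(dl*vi) - v2*0 - dl = dl*(v1*vi - 1)" by (simp add: algebra_simps)
  then show ?thesis using vi by (metis dvd_mult)
next
  case True
  then have nd: "\<not> int p dvd v2" using V_nz assms by blast
  obtain wi where wi: "int p dvd (v2*wi - 1)" using inv_mod nd by blast
  have "v1*0 - v2*(-(dl*wi)) - dl = dl*(v2*wi - 1)" by (simp add: algebra_simps)
  then show ?thesis using wi by (metis dvd_mult)
qed

lemma card_rng: "card {0..<int p} = p" by simp

lemma L_count:
  assumes v: "(v1,v2) \<in> V p" "(v1,v2) \<noteq> (0,0)" and dl: "dl \<in> {0..<int p}"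
  shows "card {u \<in> V p. dt (v1,v2) u mod int p = dl} = p"
proof -
  obtain x0 y0 where s0: "int p dvd (v1*y0 - v2*x0 - dl)" using exist_sol[OF v] by blast
  define f where "f s = ((x0 + s*v1) mod int p, (y0 + s*v2) mod int p)" for s
  have dlm: "dl mod int p = dl" using dl by simp
  have "{u \<in> V p. dt (v1,v2) u mod int p = dl} = f ` {0..<int p}"
  proof (intro equalityI subsetI)
    fix u assume u: "u \<in> {u \<in> V p. dt (v1,v2) u mod int p = dl}"
    obtain u1 u2 where uu: "u = (u1,u2)" by (cases u) auto
    have "(v1*u2 - v2*u1) mod int p = dl mod int p" using u uu dlm by (simp add: dt_def)
    then have "int p dvd (v1*u2 - v2*u1 - dl)" by (simp add: mod_eq_dvd_iff)
    then have "int p dvd ((v1*u2 - v2*u1 - dl) - (v1*y0 - v2*x0 - dl))" using s0 by (rule dvd_diff)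
    then have "int p dvd (v1*(u2-y0) - v2*(u1-x0))" by (simp add: algebra_simps)
    then obtain s where s: "int p dvd (u1 - x0 - s*v1)" "int p dvd (u2 - y0 - s*v2)"
      using mult_lem[OF v] by (metis diff_diff_eq)
    have "(x0 + (s mod int p)*v1) mod int p = (x0 + s*v1) mod int p" by (metis mod_add_right_eq mod_mult_left_eq)
    also have "\<dots> = u1 mod int p" using s(1) by (simp add: mod_eq_dvd_iff) (metis dvd_diff_commute diff_diff_eq)
    also have "\<dots> = u1" using u uu by (simp add: V_def)
    finally have 1: "(x0 + (s mod int p)*v1) mod int p = u1" .
    have "(y0 + (s mod int p)*v2) mod int p = (y0 + s*v2) mod int p" by (metis mod_add_right_eq mod_mult_left_eq)
    also have "\<dots> = u2 mod int p" using s(2) by (simp add: mod_eq_dvd_iff) (metis dvd_diff_commute diff_diff_eq)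
    also have "\<dots> = u2" using u uu by (simp add: V_def)
    finally have 2: "(y0 + (s mod int p)*v2) mod int p = u2" .
    have "s mod int p \<in> {0..<int p}" using P_gt1 by simp
    then show "u \<in> f ` {0..<int p}" using 1 2 uu by (auto simp: f_def intro!: image_eqI[of _ _ "s mod int p"])
  next
    fix u assume "u \<in> f ` {0..<int p}"
    then obtain s where u: "u = f s" by auto
    have "u \<in> V p" using u P_gt1 by (simp add: f_def V_def)
    moreover have "dt (v1,v2) u mod int p = (v1*(y0 + s*v2) - v2*(x0 + s*v1)) mod int p"
      by (simp add: u f_def dt_def mod_dm2)
    moreover have "\<dots> = (v1*y0 - v2*x0) mod int p" by (simp add: algebra_simps)
    moreover have "\<dots> = dl" using s0 dlm by (metis mod_eq_dvd_iff)
    ultimately show "u \<in> {u \<in> V p. dt (v1,v2) u mod int p = dl}" by simp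
  qed
  moreover have "inj_on f {0..<int p}"
  proof
    fix s t assume st: "s \<in> {0..<int p}" "t \<in> {0..<int p}" "f s = f t"
    have "int p dvd ((s-t)*v1 + 0*v2)" "int p dvd ((s-t)*v2 + 0*v2)"
      using st(3) by (simp_all add: f_def mod_eq_dvd_iff algebra_simps)
    then have "int p dvd ((s-t)*v1)" "int p dvd ((s-t)*v2)" by simp_all
    then have "int p dvd (s - t)" using V_nz[OF v] dvd_mult_P by blast
    then show "s = t" using rng_eq st by blast
  qed
  ultimately show ?thesis by (simp add: card_image)
qed

lemma card_V: "card (V p) = p^2"
  by (simp add: V_def card_cartesian_product power2_eq_square)

lemma finite_V: "finite (V p)" by (simp add: V_def)

lemma card_Sp: "card (Sp p) = p^3 - p"
proof -
  define f where "f = (\<lambda>(v::int\<times>int,u::int\<times>int). (fst v, fst u, snd v, snd u))"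
  define S where "S = (SIGMA v:(V p - {(0,0)}). {u \<in> V p. dt v u mod int p = 1})"
  have "Sp p = f ` S"
  proof (intro equalityI subsetI)
    fix g assume g: "g \<in> Sp p"
    obtain a b c d where gg: "g = (a,b,c,d)" by (cases g) auto
    have e: "a mod int p = a" "b mod int p = b" "c mod int p = c" "d mod int p = d"
      using g gg by (auto simp: Sp_def gm_def)
    have rm: "\<And>x. x mod int p \<in> {0..<int p}" using P_gt1 by simp
    have r: "a \<in> {0..<int p}" "b \<in> {0..<int p}" "c \<in> {0..<int p}" "d \<in> {0..<int p}"
      using rm e by metis+
    have dd: "(a*d - b*c) mod int p = 1" using g gg by (simp add: Sp_def dtm_def)
    have "(a,c) \<noteq> (0,0)" using dd by auto
    then have "((a,c),(b,d)) \<in> S" using r dd by (simp add: S_def V_def dt_def algebra_simps)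
    then show "g \<in> f ` S" using gg by (force simp: f_def)
  next
    fix g assume "g \<in> f ` S"
    then obtain a b c d where gg: "g = (a,b,c,d)" and m: "((a,c),(b,d)) \<in> S" by (auto simp: f_def)
    then show "g \<in> Sp p" by (auto simp: S_def Sp_def gm_def dtm_def dt_def V_def algebra_simps)
  qed
  moreover have "inj_on f S" by (auto simp: f_def inj_on_def)
  moreover have "card S = (p^2 - 1) * p"
  proof -
    have "card S = (\<Sum>v\<in>V p - {(0,0)}. card {u \<in> V p. dt v u mod int p = 1})"
      unfolding S_def using finite_V by (intro card_SigmaI) auto
    also have "\<dots> = (\<Sum>v\<in>V p - {(0,0)}. p)"
    proof (intro sum.cong refl)
      fix v assume "v \<in> V p - {(0,0)}"
      then show "card {u \<in> V p. dt v u mod int p = 1} = p"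
        using L_count[of "fst v" "snd v" 1] P_gt1 by (cases v) auto
    qed
    also have "\<dots> = (p^2 - 1) * p"
      using P_gt1 by (simp add: card_V V_def card_Diff_singleton power2_eq_square)
    finally show ?thesis .
  qed
  ultimately have "card (Sp p) = (p^2 - 1) * p" by (simp add: card_image)
  also have "\<dots> = p^3 - p" by (simp add: algebra_simps power2_eq_square power3_eq_cube diff_mult_distrib)
  finally show ?thesis .
qed

definition NR :: "nat \<Rightarrow> nat \<Rightarrow> (int\<times>int) list set" where
  "NR q n = {xs \<in> configs q n. \<not> rk2 q xs}"

definition W :: "nat \<Rightarrow> (int\<times>int) list \<Rightarrow> (int\<times>int) set" where
  "W q xs = {x \<in> V q. \<forall>u\<in>set xs. dt u x mod int q = 0}"

lemma dt_self: "dt x x = 0" by (simp add: dt_def)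

lemma dt_swap0: "(dt x u mod int p = 0) = (dt u x mod int p = 0)"
proof -
  have "dt x u = - dt u x" by (simp add: dt_def)
  then show ?thesis by (simp add: dvd_eq_mod_eq_0[symmetric])
qed

lemma rk2_Cons: "(\<not> rk2 p (x#xs)) \<longleftrightarrow> (\<not> rk2 p xs \<and> (\<forall>u\<in>set xs. dt u x mod int p = 0))"
  unfolding rk2_def using dt_swap0 by (auto simp: dt_self)

lemma rk2_Cons': "rk2 p (x#xs) \<longleftrightarrow> (rk2 p xs \<or> (\<exists>u\<in>set xs. dt u x mod int p \<noteq> 0))"
  using rk2_Cons by blast

lemma finite_configs: "finite (configs p n)"
  unfolding configs_alt using finite_V by (rule finite_lists_length_eq)

lemma card_configs: "card (configs p n) = p^(2*n)"
  unfolding configs_alt by (simp add: card_lists_length_eq finite_V card_V power_mult)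

lemma zero_V: "(0,0) \<in> V p" using P_gt1 by (simp add: V_def)

lemma zlist: "replicate n (0,0) \<in> NR p n"
  using zero_V by (auto simp: NR_def configs_alt rk2_def dt_def)

lemma nonzero_elem: "\<not> zr xs \<Longrightarrow> \<exists>v\<in>set xs. v \<noteq> (0,0)"
  by (auto simp: zr_def)

lemma zr_iff: "xs \<in> configs p n \<Longrightarrow> zr xs \<longleftrightarrow> xs = replicate n (0,0)"
proof
  assume "xs \<in> configs p n" "zr xs"
  then show "xs = replicate n (0,0)"
    by (metis (mono_tags) zr_def configs_alt mem_Collect_eq replicate_length_same)
next
  assume "xs = replicate n (0,0)" then show "zr xs" by (simp add: zr_def)
qed

lemma W_card:
  assumes xs: "xs \<in> NR p n" "\<not> zr xs"
  shows "card (W p xs) = p"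
proof -
  obtain v0 where v0: "v0 \<in> set xs" "v0 \<noteq> (0,0)" using nonzero_elem xs(2) by blast
  obtain v1 v2 where vv: "v0 = (v1,v2)" by (cases v0) auto
  have v0V: "(v1,v2) \<in> V p" using xs v0 vv by (auto simp: NR_def configs_alt)
  have "W p xs = {x \<in> V p. dt (v1,v2) x mod int p = 0}"
  proof (intro equalityI subsetI)
    fix x assume "x \<in> W p xs" then show "x \<in> {x \<in> V p. dt (v1,v2) x mod int p = 0}"
      using v0 vv by (auto simp: W_def)
  next
    fix x assume x: "x \<in> {x \<in> V p. dt (v1,v2) x mod int p = 0}"
    obtain x1 x2 where xx: "x = (x1,x2)" by (cases x) auto
    have "dt u x mod int p = 0" if u: "u \<in> set xs" for u
    proof -
      obtain u1 u2 where uu: "u = (u1,u2)" by (cases u) auto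
      have "dt (v1,v2) u mod int p = 0" using xs u v0 vv by (auto simp: NR_def rk2_def)
      then have "int p dvd (v1*u2 - v2*u1)" by (simp add: dt_def uu dvd_eq_mod_eq_0)
      then obtain s where s: "int p dvd (u1 - s*v1)" "int p dvd (u2 - s*v2)"
        using mult_lem[OF v0V] v0 vv by blast
      have dx: "int p dvd (v1*x2 - v2*x1)" using x xx by (simp add: dt_def dvd_eq_mod_eq_0)
      have e: "u1*x2 - u2*x1 = (u1 - s*v1)*x2 - (u2 - s*v2)*x1 + s*(v1*x2 - v2*x1)"
        by (simp add: algebra_simps)
      have "int p dvd (u1*x2 - u2*x1)" unfolding e using s dx by simp
      then show ?thesis by (simp add: dt_def uu xx dvd_eq_mod_eq_0)
    qed
    then show "x \<in> W p xs" using x by (simp add: W_def)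
  qed
  then show ?thesis using L_count[OF v0V] v0 vv P_gt1 by simp
qed

lemma W_zero: "W p (replicate n (0,0)) = V p"
  by (auto simp: W_def dt_def)

lemma NR_Suc: "NR p (Suc n) = (\<lambda>(xs,x). x#xs) ` (SIGMA xs:NR p n. W p xs)"
  by (auto simp: NR_def W_def configs_alt rk2_Cons' length_Suc_conv)

lemma finite_NR: "finite (NR p n)"
  using finite_configs by (simp add: NR_def)

lemma NR_card_Suc: "int (card (NR p (Suc n))) = int p^2 + int p * (int (card (NR p n)) - 1)"
proof -
  have inj: "inj_on (\<lambda>(xs,x). x#xs) (SIGMA xs:NR p n. W p xs)" by (auto simp: inj_on_def)
  have fW: "\<forall>xs\<in>NR p n. finite (W p xs)" using finite_V by (simp add: W_def)
  have "card (NR p (Suc n)) = (\<Sum>xs\<in>NR p n. card (W p xs))"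
    unfolding NR_Suc using card_image[OF inj] card_SigmaI[OF finite_NR fW] by simp
  also have "\<dots> = card (W p (replicate n (0,0))) + (\<Sum>xs\<in>NR p n - {replicate n (0,0)}. card (W p xs))"
    using sum.remove[OF finite_NR zlist] by simp
  also have "(\<Sum>xs\<in>NR p n - {replicate n (0,0)}. card (W p xs)) = (\<Sum>xs\<in>NR p n - {replicate n (0,0)}. p)"
  proof (intro sum.cong refl)
    fix xs assume xs: "xs \<in> NR p n - {replicate n (0,0)}"
    then have "\<not> zr xs" using zr_iff by (auto simp: NR_def)
    then show "card (W p xs) = p" using W_card xs by blast
  qed
  also have "\<dots> = (card (NR p n) - 1) * p" using zlist finite_NR by simp
  finally have "card (NR p (Suc n)) = p^2 + (card (NR p n) - 1) * p"
    by (simp add: W_zero card_V)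
  moreover have "card (NR p n) \<ge> 1" using zlist finite_NR
    by (metis One_nat_def Suc_leI card_gt_0_iff empty_iff)
  then obtain c' where c': "card (NR p n) = Suc c'" by (metis Suc_le_D One_nat_def)
  ultimately show ?thesis by (simp add: algebra_simps)
qed

lemma NR_card: "int (card (NR p n)) = int p^(n+1) + int p^n - int p"
proof (induction n)
  case 0
  have "NR p 0 = {[]}" by (auto simp: NR_def configs_alt rk2_def)
  then show ?case by simp
next
  case (Suc n)
  show ?case unfolding NR_card_Suc Suc.IH by (simp add: algebra_simps power2_eq_square)
qed

lemma mv_zero: "mv p g (0,0) = (0,0)"
  by (cases g) (simp add: mv_def)

lemma orbit_zero: "orbit p (replicate n (0,0)) = {replicate n (0,0)}"
proof -
  have "act p g (replicate n (0,0)) = replicate n (0,0)" for g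
    by (simp add: act_map mv_zero)
  moreover have "(1,0,0,1) \<in> SL2Z" by (simp add: SL2Z_iff dtm_def)
  ultimately show ?thesis by (auto simp: orbit_iff intro!: bexI[of _ "(1,0,0,1)"])
qed

lemma Sp_rng: "g \<in> Sp p \<Longrightarrow> g = (a,b,c,d) \<Longrightarrow>
   a \<in> {0..<int p} \<and> b \<in> {0..<int p} \<and> c \<in> {0..<int p} \<and> d \<in> {0..<int p}"
proof -
  assume "g \<in> Sp p" "g = (a,b,c,d)"
  then have e: "a mod int p = a" "b mod int p = b" "c mod int p = c" "d mod int p = d"
    by (auto simp: Sp_def gm_def)
  have rm: "\<And>x. x mod int p \<in> {0..<int p}" using P_gt1 by simp
  show ?thesis using rm e by metis
qed

lemma mv_eq_dvd: "mv p (a,b,c,d) (u1,u2) = mv p (a',b',c',d') (u1,u2) \<Longrightarrow>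
   int p dvd ((a-a')*u1 + (b-b')*u2) \<and> int p dvd ((c-c')*u1 + (d-d')*u2)"
  by (simp add: mv_def mod_eq_dvd_iff algebra_simps)

lemma orbit_rk2:
  assumes xs: "xs \<in> configs p n" "rk2 p xs"
  shows "card (orbit p xs) = p^3 - p"
proof -
  obtain u w where uw: "u \<in> set xs" "w \<in> set xs" "dt u w mod int p \<noteq> 0"
    using xs(2) by (auto simp: rk2_def)
  obtain u1 u2 where uu: "u = (u1,u2)" by (cases u) auto
  obtain w1 w2 where ww: "w = (w1,w2)" by (cases w) auto
  have nd: "\<not> int p dvd (u1*w2 - u2*w1)" using uw uu ww by (simp add: dt_def dvd_eq_mod_eq_0)
  have "inj_on (\<lambda>h. act p h xs) (Sp p)"
  proof
    fix g h assume g: "g \<in> Sp p" and h: "h \<in> Sp p" and e: "act p g xs = act p h xs"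
    obtain a b c d where gg: "g = (a,b,c,d)" by (cases g) auto
    obtain a' b' c' d' where hh: "h = (a',b',c',d')" by (cases h) auto
    have "mv p g u = mv p h u" "mv p g w = mv p h w" using e uw by (auto simp: act_map)
    then have 1: "int p dvd ((a-a')*u1 + (b-b')*u2)" "int p dvd ((c-c')*u1 + (d-d')*u2)"
      and 2: "int p dvd ((a-a')*w1 + (b-b')*w2)" "int p dvd ((c-c')*w1 + (d-d')*w2)"
      using mv_eq_dvd gg hh uu ww by metis+
    have "int p dvd (a-a') \<and> int p dvd (b-b')" using indep[OF 1(1) 2(1) nd] .
    moreover have "int p dvd (c-c') \<and> int p dvd (d-d')" using indep[OF 1(2) 2(2) nd] .
    ultimately show "g = h" using Sp_rng[OF g gg] Sp_rng[OF h hh] rng_eq gg hh by metis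
  qed
  then show ?thesis by (simp add: orbit_Sp card_image card_Sp)
qed

lemma mv_scal:
  assumes "int p dvd (u1 - s*v1)" "int p dvd (u2 - s*v2)"
  shows "mv p g (u1,u2) = ((s * fst (mv p g (v1,v2))) mod int p, (s * snd (mv p g (v1,v2))) mod int p)"
proof -
  obtain a b c d where gg: "g = (a,b,c,d)" by (cases g) auto
  have e1: "a*u1 + b*u2 - s*(a*v1+b*v2) = a*(u1 - s*v1) + b*(u2 - s*v2)" by (simp add: algebra_simps)
  have e2: "c*u1 + d*u2 - s*(c*v1+d*v2) = c*(u1 - s*v1) + d*(u2 - s*v2)" by (simp add: algebra_simps)
  have "(a*u1 + b*u2) mod int p = (s*(a*v1+b*v2)) mod int p"
    unfolding mod_eq_dvd_iff e1 using assms by simp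
  moreover have "(c*u1 + d*u2) mod int p = (s*(c*v1+d*v2)) mod int p"
    unfolding mod_eq_dvd_iff e2 using assms by simp
  ultimately show ?thesis by (simp add: gg mv_def mod_mult_right_eq)
qed

lemma orbit_rk1:
  assumes xs: "xs \<in> configs p n" "\<not> rk2 p xs" "\<not> zr xs"
  shows "card (orbit p xs) = p^2 - 1"
proof -
  obtain v0 where v0: "v0 \<in> set xs" "v0 \<noteq> (0,0)" using nonzero_elem xs(3) by blast
  obtain j where j: "j < length xs" "xs ! j = v0" using v0 by (metis in_set_conv_nth)
  obtain v1 v2 where vv: "v0 = (v1,v2)" by (cases v0) auto
  have v0V: "(v1,v2) \<in> V p" using xs v0 vv by (auto simp: configs_alt)
  have "bij_betw (\<lambda>ys. ys ! j) (orbit p xs) (V p - {(0,0)})"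
  proof (rule bij_betw_imageI)
    show "inj_on (\<lambda>ys. ys ! j) (orbit p xs)"
    proof
      fix ys zs assume ys: "ys \<in> orbit p xs" and zs: "zs \<in> orbit p xs" and e: "ys ! j = zs ! j"
      obtain g where g: "ys = act p g xs" using ys by (auto simp: orbit_iff)
      obtain h where h: "zs = act p h xs" using zs by (auto simp: orbit_iff)
      have e0: "mv p g (v1,v2) = mv p h (v1,v2)" using e g h j vv by (simp add: act_map)
      have "mv p g u = mv p h u" if u: "u \<in> set xs" for u
      proof -
        obtain u1 u2 where uu: "u = (u1,u2)" by (cases u) auto
        have "dt (v1,v2) u mod int p = 0" using xs u v0 vv by (auto simp: rk2_def)
        then have "int p dvd (v1*u2 - v2*u1)" by (simp add: dt_def uu dvd_eq_mod_eq_0)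
        then obtain s where s: "int p dvd (u1 - s*v1)" "int p dvd (u2 - s*v2)"
          using mult_lem[OF v0V] v0 vv by blast
        show ?thesis using mv_scal[OF s, of g] mv_scal[OF s, of h] e0 uu by simp
      qed
      then show "ys = zs" using g h by (simp add: act_map)
    qed
  next
    show "(\<lambda>ys. ys ! j) ` orbit p xs = V p - {(0,0)}"
    proof (intro equalityI subsetI)
      fix w assume "w \<in> (\<lambda>ys. ys ! j) ` orbit p xs"
      then obtain ys where ys: "ys \<in> orbit p xs" and w: "w = ys ! j" by auto
      obtain g where g: "ys = act p g xs" using ys by (auto simp: orbit_iff)
      have wV: "w \<in> V p" using w g j by (simp add: act_map mv_V)
      have "w \<noteq> (0,0)"
      proof
        assume w0: "w = (0,0)"
        obtain h where h: "xs = act p h ys" using orbit_sym[OF xs(1) ys] by (auto simp: orbit_iff)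
        have "length ys = length xs" using g by (simp add: act_map)
        then have xj: "xs ! j = mv p h (ys ! j)" using h j by (simp add: act_map)
        have "ys ! j = (0,0)" using w w0 by simp
        then have "xs ! j = (0,0)" using xj by (simp add: mv_zero)
        then show False using j v0 by simp
      qed
      then show "w \<in> V p - {(0,0)}" using wV by simp
    next
      fix w assume w: "w \<in> V p - {(0,0)}"
      obtain w1 w2 where ww: "w = (w1,w2)" by (cases w) auto
      have wV: "(w1,w2) \<in> V p" "(w1,w2) \<noteq> (0,0)" using w ww by auto
      obtain b0 d0 where B0: "int p dvd (v1*d0 - v2*b0 - 1)" using exist_sol[OF v0V] v0 vv by blast
      obtain bw dw where Bw: "int p dvd (w1*dw - w2*bw - 1)" using exist_sol[OF wV] by blast
      define M where "M = mmul (w1,bw,w2,dw) (adj (v1,b0,v2,d0))"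
      have "mv p (adj (v1,b0,v2,d0)) (v1,v2) = ((d0*v1 - b0*v2) mod int p, 0)"
        by (simp add: adj_def mv_def algebra_simps)
      also have "\<dots> = (1,0)"
      proof -
        have "(d0*v1 - b0*v2) mod int p = 1 mod int p" using B0 by (simp add: mod_eq_dvd_iff algebra_simps)
        then show ?thesis using P_gt1 by simp
      qed
      finally have "mv p M (v1,v2) = mv p (w1,bw,w2,dw) (1,0)" by (simp add: M_def mv_mul)
      also have "\<dots> = w" using wV ww by (simp add: mv_def V_def)
      finally have Mv: "mv p M (v1,v2) = w" .
      have dM: "dtm M = (w1*dw - bw*w2) * (v1*d0 - b0*v2)"
        unfolding M_def dtm_mul dtm_adj by (simp add: dtm_def)
      have eM: "dtm M - 1 = (w1*dw - w2*bw - 1) * (v1*d0 - b0*v2) + (v1*d0 - v2*b0 - 1)"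
        unfolding dM by (simp add: algebra_simps)
      have "int p dvd (dtm M - 1)" unfolding eM using B0 Bw by simp
      moreover obtain a b c d where MM: "M = (a,b,c,d)" by (cases M) auto
      ultimately have "int p dvd (a*d - b*c - 1)" by (simp add: dtm_def)
      then obtain g where g: "g \<in> SL2Z" "gm p g = gm p M"
        using lift MM by blast
      have "mv p g (v1,v2) = w" using Mv g by (metis mv_gm)
      moreover have "act p g xs \<in> orbit p xs" using g by (auto simp: orbit_iff)
      moreover have "act p g xs ! j = mv p g (v1,v2)" using j vv by (simp add: act_map)
      ultimately show "w \<in> (\<lambda>ys. ys ! j) ` orbit p xs" by (metis image_eqI)
    qed
  qed
  then have "card (orbit p xs) = card (V p - {(0,0)})" by (rule bij_betw_same_card)
  also have "\<dots> = p^2 - 1" using zero_V finite_V by (simp add: card_V)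
  finally show ?thesis .
qed

lemma part_count:
  assumes T: "T \<subseteq> configs p n" "\<forall>x\<in>T. orbit p x \<subseteq> T" "\<forall>x\<in>T. card (orbit p x) = k"
  shows "k * card (orbit p ` T) = card T"
proof -
  have fT: "finite T" using T(1) finite_configs finite_subset by blast
  have U: "\<Union>(orbit p ` T) = T"
  proof (intro equalityI subsetI)
    fix x assume "x \<in> \<Union>(orbit p ` T)"
    then obtain y where "y \<in> T" "x \<in> orbit p y" by blast
    then show "x \<in> T" using T(2) by blast
  next
    fix x assume x: "x \<in> T"
    then have "x \<in> configs p n" using T(1) by blast
    then have "x \<in> orbit p x" by (rule orbit_self)
    then show "x \<in> \<Union>(orbit p ` T)" using x by blast
  qed
  have "k * card (orbit p ` T) = card (\<Union>(orbit p ` T))"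
  proof (rule card_partition)
    show "finite (orbit p ` T)" using fT by simp
    show "finite (\<Union>(orbit p ` T))" using U fT by simp
    show "card c = k" if "c \<in> orbit p ` T" for c using T(3) that by blast
    show "c1 \<inter> c2 = {}" if c: "c1 \<in> orbit p ` T" "c2 \<in> orbit p ` T" "c1 \<noteq> c2" for c1 c2
    proof -
      from c obtain x y where "x \<in> T" "y \<in> T" "c1 = orbit p x" "c2 = orbit p y" by blast
      moreover then have "x \<in> configs p n" "y \<in> configs p n" using T(1) by blast+
      ultimately show "c1 \<inter> c2 = {}" using orbit_disj[of x n y] c(3) by blast
    qed
  qed
  then show ?thesis using U by simp
qed

lemma r_eq: "int (r p n) * (int p^3 - int p) =
   (int p^3 - int p) + int p * (int (card (NR p n)) - 1) + (int p^(2*n) - int (card (NR p n)))"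
proof -
  define C where "C = configs p n"
  define Z where "Z = {xs \<in> C. zr xs}"
  define A where "A = {xs \<in> C. \<not> zr xs \<and> \<not> rk2 p xs}"
  define B where "B = {xs \<in> C. rk2 p xs}"
  have CU: "C = Z \<union> A \<union> B" by (auto simp: Z_def A_def B_def)
  have rk2_z: "zr xs \<Longrightarrow> \<not> rk2 p xs" for xs by (auto simp: zr_def rk2_def dt_def)
  have cl: "ys \<in> orbit p xs \<Longrightarrow> xs \<in> C \<Longrightarrow> ys \<in> C \<and> zr ys = zr xs \<and> rk2 p ys = rk2 p xs" for xs ys
  proof -
    assume a: "ys \<in> orbit p xs" "xs \<in> C"
    have "ys \<in> C" using orbit_sub[of xs n] a unfolding C_def by blast
    moreover have "zr ys = zr xs" using zr_orbit[of xs n ys] a unfolding C_def by blast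
    moreover have "rk2 p ys = rk2 p xs" using rk2_orbit[of ys xs] a by blast
    ultimately show ?thesis by blast
  qed
  have d1: "orbit p ` Z \<inter> orbit p ` A = {}"
  proof (rule ccontr)
    assume "orbit p ` Z \<inter> orbit p ` A \<noteq> {}"
    then obtain x y where xy: "x \<in> Z" "y \<in> A" "orbit p x = orbit p y" by blast
    have "y \<in> orbit p x" using xy orbit_self[of y n] by (simp add: A_def C_def)
    then have "zr y = zr x" using cl[of y x] xy(1) by (simp add: Z_def)
    then show False using xy by (simp add: Z_def A_def)
  qed
  have d2: "(orbit p ` Z \<union> orbit p ` A) \<inter> orbit p ` B = {}"
  proof (rule ccontr)
    assume "(orbit p ` Z \<union> orbit p ` A) \<inter> orbit p ` B \<noteq> {}"
    then obtain x y where xy: "x \<in> Z \<union> A" "y \<in> B" "orbit p x = orbit p y" by blast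
    have xC: "x \<in> C" "\<not> rk2 p x" using xy(1) rk2_z by (auto simp: Z_def A_def)
    have "y \<in> orbit p x" using xy orbit_self[of y n] by (simp add: B_def C_def)
    then have "rk2 p y = rk2 p x" using cl[of y x] xC by blast
    then show False using xy xC by (simp add: B_def)
  qed
  have fC: "finite C" using finite_configs by (simp add: C_def)
  have "r p n = card (orbit p ` C)" by (simp add: r_def C_def Setcompr_eq_image)
  also have "\<dots> = card (orbit p ` Z) + card (orbit p ` A) + card (orbit p ` B)"
    unfolding CU image_Un using fC d1 d2 CU
    by (simp add: card_Un_disjoint)
  finally have r: "r p n = card (orbit p ` Z) + card (orbit p ` A) + card (orbit p ` B)" .
  have Zs: "Z = {replicate n (0,0)}"
    using zr_iff zlist by (auto simp: Z_def C_def NR_def)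
  have oZ: "card (orbit p ` Z) = 1" by (simp add: Zs)
  have rk1: "\<forall>x\<in>A. card (orbit p x) = p^2 - 1" using orbit_rk1 by (auto simp: A_def C_def)
  have oA: "(p^2 - 1) * card (orbit p ` A) = card A"
    by (rule part_count[of _ n]) (use rk1 in \<open>auto simp: A_def C_def dest: cl\<close>)
  have oB: "(p^3 - p) * card (orbit p ` B) = card B"
    by (rule part_count[of _ n]) (auto simp: B_def C_def dest: cl intro: orbit_rk2)
  have A_eq: "A = NR p n - {replicate n (0,0)}"
    using zr_iff by (auto simp: A_def NR_def C_def)
  have B_eq: "B = C - NR p n" by (auto simp: B_def NR_def C_def)
  have NRC: "NR p n \<subseteq> C" by (auto simp: NR_def C_def)
  have cA: "int (card A) = int (card (NR p n)) - 1"
  proof -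
    have "card (NR p n) \<ge> 1" using zlist[of n] finite_NR[of n]
      by (metis One_nat_def Suc_leI card_gt_0_iff empty_iff)
    then show ?thesis using A_eq zlist finite_NR by (simp add: of_nat_diff)
  qed
  have cB: "int (card B) = int p^(2*n) - int (card (NR p n))"
  proof -
    have "card (NR p n) \<le> card C" using NRC fC by (rule card_mono[rotated])
    then have "card (NR p n) \<le> p^(2*n)" by (simp add: C_def card_configs)
    moreover have "card B = card C - card (NR p n)" using B_eq NRC fC
      by (simp add: card_Diff_subset finite_subset)
    ultimately show ?thesis by (simp add: of_nat_diff C_def card_configs)
  qed
  have p1: "int (p^2 - 1) = int p^2 - 1" using P_gt1 by (simp add: of_nat_diff)
  have p3: "int (p^3 - p) = int p^3 - int p"
  proof -
    have "p \<le> p^3" using P_gt1 by (simp add: self_le_power)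
    then show ?thesis by (simp add: of_nat_diff)
  qed
  have oA': "(int p^2 - 1) * int (card (orbit p ` A)) = int (card (NR p n)) - 1"
    using arg_cong[OF oA, of int] p1 cA by simp
  have oB': "(int p^3 - int p) * int (card (orbit p ` B)) = int p^(2*n) - int (card (NR p n))"
    using arg_cong[OF oB, of int] p3 cB by simp
  have rr: "int (r p n) = 1 + int (card (orbit p ` A)) + int (card (orbit p ` B))" using r oZ by simp
  have e: "int p^3 - int p = int p * (int p^2 - 1)" by (simp add: power2_eq_square power3_eq_cube algebra_simps)
  have "int (r p n) * (int p^3 - int p) = (int p^3 - int p) + int p * ((int p^2 - 1) * int (card (orbit p ` A)))
      + (int p^3 - int p) * int (card (orbit p ` B))"
    unfolding rr distrib_right mult_1_left
    by (subst (2) e) (simp add: mult_ac)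
  then show ?thesis unfolding oA' oB' .
qed

end


theorem lemma4p2:
  fixes p n :: nat
  assumes "prime p" and "n \<ge> 1"
  shows "F p n = int p ^ (n - 1) * (int p ^ n + int p - 1)"
proof -
  define P where "P = int p"
  define K where "K = P^3 - P"
  have P1: "P > 1" using P_gt1[OF assms(1)] by (simp add: P_def)
  have "P*1 < P*(P*P)" using P1 by (intro mult_strict_left_mono) (auto intro: less_1_mult)
  then have K0: "K \<noteq> 0" unfolding K_def power3_eq_cube mult.assoc by linarith
  obtain m where n: "n = Suc m" using assms(2) by (cases n) auto
  define X where "X = P^m"
  have pw: "P^n = P*X" "P^(n+1) = P*P*X" "P^(Suc n + 1) = P*P*P*X" "P^(2*n) = P*P*X*X"
     "P^(2*Suc n) = P*P*P*P*X*X" "P^(n-1) = X" "P^(Suc n) = P*P*X"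
    by (simp_all add: n X_def power_add power_mult power2_eq_square mult_ac)
  have r1: "int (r p (Suc n)) * K = K + P*(int (card (NR p (Suc n))) - 1) + (P^(2*Suc n) - int (card (NR p (Suc n))))"
    using r_eq[OF assms(1), of "Suc n"] unfolding P_def K_def .
  have r0: "int (r p n) * K = K + P*(int (card (NR p n)) - 1) + (P^(2*n) - int (card (NR p n)))"
    using r_eq[OF assms(1), of n] unfolding P_def K_def .
  have N1: "int (card (NR p (Suc n))) = P^(Suc n+1) + P^(Suc n) - P"
    using NR_card[OF assms(1), of "Suc n"] unfolding P_def .
  have N0: "int (card (NR p n)) = P^(n+1) + P^n - P"
    using NR_card[OF assms(1), of n] unfolding P_def .
  have "F p n * K = int (r p (Suc n)) * K - int (r p n) * K"
    by (simp add: F_def left_diff_distrib)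
  also have "\<dots> = (P^(n-1) * (P^n + P - 1)) * K"
    unfolding r1 r0 unfolding N1 N0 pw K_def by (simp add: algebra_simps power3_eq_cube)
  finally have "F p n * K = (P^(n-1) * (P^n + P - 1)) * K" .
  then show ?thesis using K0 by (simp add: P_def)
qed

end
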